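(* Let $n\ge2$ be even, $r\ge1$, $V=\{1,\dots,n\}$, $R=\{n+1,\dots,n+r\}$, and let $G^R$ be a graph on $V\cup R$ with $G$ its induced subgraph on $V$. Let $M_0$ be a perfect matching of $G$ and let $F$ be an RC-rooted spanning forest of $G^R$ compatible with $M_0$, with cycles $C_1,\dots,C_{k}$ ($k\ge0$). For $(\varepsilon_1,\dots,\varepsilon_k)\in\{0,1\}^k$, let $M^{(\varepsilon_1,\dots,\varepsilon_k)}$ be the edge set consisting of: the edges of $M_0$ lying on branches of $F$ (i.e. not on cycles); for each $j$ with $\varepsilon_j=0$, the edges of $M_0$ on $C_j$; for each $j$ with $\varepsilon_j=1$, the edges of $F\setminus M_0$ on $C_j$ (and $M^{()}=M_0$ if $k=0$). Then for every $(\varepsilon_1,\dots,\varepsilon_k)\in\{0,1\}^k$, $M^{(\varepsilon_1,\dots,\varepsilon_k)}$ is a perfect matching of $G$.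
   Context: An RC-rooted spanning forest (RCRSF) of $G^R$ is a set of oriented edges of $G^R$ spanning the vertices of $V$ such that each connected component is either a tree rooted at a vertex of $R$, or a tree rooted on a cycle of $G$ (a unicycle); edges of components are oriented towards the root, and cycles are oriented in one of the two directions. An RCRSF $F$ is compatible with $M_0$ if it consists of the $n/2$ edges of $M_0$ together with $n/2$ edges of $G^R$ not in $M_0$, and moreover every cycle of its unicycles has even length $\ge4$ and alternates between edges of $M_0$ and edges of $F\setminus M_0$. *)

theory Defs
  imports Main
begin

text \<open>An oriented edge is a pair (u,v),
meaning u is oriented towards v; its underlying undirected edge is {u,v}.\<close>

definition und :: "nat \<times> nat \<Rightarrow> nat set" where
  "und e = {fst e, snd e}"

definition is_graph :: "nat set \<Rightarrow> nat set set \<Rightarrow> bool" where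
  "is_graph W E \<longleftrightarrow> (\<forall>e\<in>E. card e = 2 \<and> e \<subseteq> W)"

definition perfect_matching :: "nat set set \<Rightarrow> nat set \<Rightarrow> nat set set \<Rightarrow> bool" where
  "perfect_matching E V M \<longleftrightarrow>
     M \<subseteq> {e \<in> E. e \<subseteq> V} \<and> (\<forall>v\<in>V. \<exists>!e. e \<in> M \<and> v \<in> e)"

text \<open>RC-rooted spanning forest of the graph E on V \<union> R, as a set of oriented
edges: every vertex has at most one outgoing edge (edges oriented towards
the root); vertices of V are never roots (trees are rooted in R, and every
vertex of a unicycle has an outgoing edge); the directed cycles lie in V
(they are cycles of the induced graph G) and are genuine cycles of the
simple graph, i.e. have length at least 3 (no loops since edges have two
endpoints, and no 2-cycles).\<close>
definition rcrsf :: "nat set set \<Rightarrow> nat set \<Rightarrow> nat set \<Rightarrow> (nat \<times> nat) set \<Rightarrow> bool" where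
  "rcrsf E V R F \<longleftrightarrow>
     (\<forall>e\<in>F. und e \<in> E) \<and>
     (\<forall>u v w. (u,v) \<in> F \<and> (u,w) \<in> F \<longrightarrow> v = w) \<and>
     (\<forall>u\<in>V. \<exists>v. (u,v) \<in> F) \<and>
     (\<forall>u. (u,u) \<in> F\<^sup>+ \<longrightarrow> u \<in> V) \<and>
     (\<forall>u v. (u,v) \<in> F \<longrightarrow> (v,u) \<notin> F)"

text \<open>The cycles of F, each given as its set of oriented edges: the cycle
through a cycle vertex u consists of the edges of F whose tail is reachable
from u.\<close>
definition cycles :: "(nat \<times> nat) set \<Rightarrow> (nat \<times> nat) set set" where
  "cycles F = {{(a,b) \<in> F. (u,a) \<in> F\<^sup>+} | u. (u,u) \<in> F\<^sup>+}"

definition compatible :: "nat \<Rightarrow> nat set set \<Rightarrow> (nat \<times> nat) set \<Rightarrow> bool" where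
  "compatible n M0 F \<longleftrightarrow>
     inj_on und F \<and> M0 \<subseteq> und ` F \<and> card (und ` F - M0) = n div 2 \<and>
     (\<forall>C\<in>cycles F. even (card C) \<and> card C \<ge> 4 \<and>
        (\<forall>a b c. (a,b) \<in> C \<and> (b,c) \<in> C \<longrightarrow> (und (a,b) \<in> M0 \<longleftrightarrow> und (b,c) \<notin> M0)))"

text \<open>The edge set M^(eps): eps C = True means epsilon = 1 on cycle C.\<close>
definition M_eps :: "nat set set \<Rightarrow> (nat \<times> nat) set \<Rightarrow> ((nat \<times> nat) set \<Rightarrow> bool) \<Rightarrow> nat set set" where
  "M_eps M0 F eps =
     {e \<in> M0. e \<notin> und ` (\<Union>(cycles F))} \<union>
     (\<Union>C\<in>{C \<in> cycles F. \<not> eps C}. und ` C \<inter> M0) \<union>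
     (\<Union>C\<in>{C \<in> cycles F. eps C}. und ` C - M0)"

end

theory Submission
  imports Defs
begin

lemma comparable:
  assumes fn: "\<forall>u v w. (u,v)\<in>R \<and> (u,w)\<in>R \<longrightarrow> v=w"
    and vx: "(v,x)\<in>R\<^sup>*" and vy: "(v,y)\<in>R\<^sup>*"
  shows "(x,y)\<in>R\<^sup>* \<or> (y,x)\<in>R\<^sup>*"
  using vy
proof (induction y rule: rtrancl_induct)
  case base
  then show ?case using vx by blast
next
  case (step y z)
  from step.IH show ?case
  proof
    assume "(x,y)\<in>R\<^sup>*" then show ?case using step.hyps(2) by auto
  next
    assume yx: "(y,x)\<in>R\<^sup>*"
    show ?case
    proof (cases "y = x")
      case True then show ?thesis using step.hyps(2) by auto
    next
      case False
      with yx have "(y,x)\<in>R\<^sup>+" by (meson rtranclD)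
      then obtain w where "(y,w)\<in>R" "(w,x)\<in>R\<^sup>*" by (meson tranclD)
      with fn step.hyps(2) have "w = z" by blast
      with \<open>(w,x)\<in>R\<^sup>*\<close> show ?thesis by auto
    qed
  qed
qed

lemma cyc_back:
  assumes fn: "\<forall>u v w. (u,v)\<in>F \<and> (u,w)\<in>F \<longrightarrow> v=w"
    and uu: "(u,u)\<in>F\<^sup>+" and uv: "(u,v)\<in>F\<^sup>+"
  shows "(v,u)\<in>F\<^sup>*"
  using uv
proof (induction v rule: trancl_induct)
  case (base y)
  from uu obtain w where "(u,w)\<in>F" "(w,u)\<in>F\<^sup>*" by (meson tranclD)
  with fn base show ?case by blast
next
  case (step y z)
  have "(y,y)\<in>F\<^sup>+" using step.IH step.hyps(1) by (meson rtrancl_trancl_trancl)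
  then obtain w where "(y,w)\<in>F" "(w,y)\<in>F\<^sup>*" by (meson tranclD)
  with fn step.hyps(2) have "w = z" by blast
  with \<open>(w,y)\<in>F\<^sup>*\<close> step.IH show ?case by auto
qed

lemma cyc_vertex:
  assumes fn: "\<forall>u v w. (u,v)\<in>F \<and> (u,w)\<in>F \<longrightarrow> v=w"
    and uu: "(u,u)\<in>F\<^sup>+" and uv: "(u,v)\<in>F\<^sup>+"
  shows "(v,v)\<in>F\<^sup>+"
  using cyc_back[OF fn uu uv] uv by (meson rtrancl_trancl_trancl)

lemma cut:
  assumes "(v,x)\<in>F\<^sup>*"
  shows "(v,x)\<in>{(p,q). (p,q)\<in>F \<and> q\<noteq>v}\<^sup>*"
  using assms
proof (induction x rule: rtrancl_induct)
  case base then show ?case by simp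
next
  case (step y z)
  show ?case
  proof (cases "z = v")
    case True then show ?thesis by simp
  next
    case False
    then have "(y,z)\<in>{(p,q). (p,q)\<in>F \<and> q\<noteq>v}" using step.hyps(2) by simp
    with step.IH show ?thesis by (meson rtrancl_into_rtrancl)
  qed
qed

lemma pred_unique:
  assumes fn: "\<forall>u v w. (u,v)\<in>F \<and> (u,w)\<in>F \<longrightarrow> v=w"
    and xa: "(x,a)\<in>F\<^sup>*" and xp: "(x,p)\<in>F\<^sup>*" and ax: "(a,x)\<in>F" and px: "(p,x)\<in>F"
  shows "a = p"
proof -
  let ?F' = "{(p,q). (p,q)\<in>F \<and> q\<noteq>x}"
  have fn': "\<forall>u v w. (u,v)\<in>?F' \<and> (u,w)\<in>?F' \<longrightarrow> v=w" using fn by blast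
  have noa: "\<And>w. (a,w)\<notin>?F'" using fn ax by blast
  have nop: "\<And>w. (p,w)\<notin>?F'" using fn px by blast
  from comparable[OF fn' cut[OF xa] cut[OF xp]]
  show ?thesis
  proof
    assume "(a,p)\<in>?F'\<^sup>*"
    then show ?thesis
    proof (cases rule: converse_rtranclE)
      case (step w) then show ?thesis using noa by blast
    qed simp
  next
    assume "(p,a)\<in>?F'\<^sup>*"
    then show ?thesis
    proof (cases rule: converse_rtranclE)
      case (step w) then show ?thesis using nop by blast
    qed simp
  qed
qed


theorem lemma6:
  fixes n r :: nat and GR M0 :: "nat set set" and F :: "(nat \<times> nat) set"
    and eps :: "(nat \<times> nat) set \<Rightarrow> bool"
  assumes "n \<ge> 2" and "even n" and "r \<ge> 1"
    and "is_graph ({1..n} \<union> {n+1..n+r}) GR"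
    and "perfect_matching GR {1..n} M0"
    and "rcrsf GR {1..n} {n+1..n+r} F"
    and "compatible n M0 F"
  shows "perfect_matching GR {1..n} (M_eps M0 F eps)"
proof -
  define V where "V = {1..n}"
  have Fe: "\<forall>e\<in>F. und e \<in> GR" and fn: "\<forall>u v w. (u,v)\<in>F \<and> (u,w)\<in>F \<longrightarrow> v=w"
    and out: "\<forall>u\<in>V. \<exists>v. (u,v)\<in>F" and cycV: "\<forall>u. (u,u)\<in>F\<^sup>+ \<longrightarrow> u\<in>V"
    using assms(6) unfolding rcrsf_def V_def by blast+
  have M0sub: "M0 \<subseteq> {e \<in> GR. e \<subseteq> V}" and M0u: "\<forall>v\<in>V. \<exists>!e. e\<in>M0 \<and> v\<in>e"
    using assms(5) unfolding perfect_matching_def V_def by blast+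
  have alt: "\<forall>C\<in>cycles F. \<forall>a b c. (a,b)\<in>C \<and> (b,c)\<in>C \<longrightarrow> (und(a,b)\<in>M0 \<longleftrightarrow> und(b,c)\<notin>M0)"
    using assms(7) unfolding compatible_def by blast
  define Cu where "Cu u = {(a,b)\<in>F. (u,a)\<in>F\<^sup>+}" for u
  have cyc: "cycles F = {Cu u | u. (u,u)\<in>F\<^sup>+}" by (simp add: cycles_def Cu_def)
  have undab: "\<And>a b. und (a,b) = {a,b}" by (simp add: und_def)
  have endp: "(u,a)\<in>F\<^sup>+ \<and> (u,b)\<in>F\<^sup>+" if "(a,b)\<in>Cu u" for u a b
    using that unfolding Cu_def by auto
  have sameC: "Cu x = Cu u" if "(u,u)\<in>F\<^sup>+" "(u,x)\<in>F\<^sup>+" for u x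
  proof -
    have xu: "(x,u)\<in>F\<^sup>*" using cyc_back[OF fn that] .
    show ?thesis unfolding Cu_def using that xu
      by (auto intro: trancl_trans rtrancl_trancl_trancl)
  qed
  have memC: "\<And>C. C \<in> cycles F \<Longrightarrow> \<exists>u. C = Cu u \<and> (u,u)\<in>F\<^sup>+" using cyc by blast
  have vert: "\<exists>u. (u,u)\<in>F\<^sup>+ \<and> (u,x)\<in>F\<^sup>+ \<and> C = Cu u" if "C \<in> cycles F" "(a,b)\<in>C" "x\<in>{a,b}" for C a b x
    using memC[OF that(1)] endp that(2,3) by blast
  have Msub: "M_eps M0 F eps \<subseteq> {e \<in> GR. e \<subseteq> V}"
  proof
    fix e assume e: "e \<in> M_eps M0 F eps"
    show "e \<in> {e \<in> GR. e \<subseteq> V}"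
    proof (cases "e \<in> M0")
      case True then show ?thesis using M0sub by blast
    next
      case False
      with e obtain C a b where C: "C \<in> cycles F" "(a,b)\<in>C" "e = und (a,b)"
        unfolding M_eps_def by auto
      have "a \<in> V" "b \<in> V" using vert[OF C(1,2)] cyc_vertex[OF fn] cycV by blast+
      moreover have "(a,b)\<in>F" using memC[OF C(1)] C(2) unfolding Cu_def by blast
      ultimately show ?thesis using C(3) Fe undab by auto
    qed
  qed
  have Muniq: "\<exists>!e. e \<in> M_eps M0 F eps \<and> x \<in> e" if xV: "x \<in> V" for x
  proof (cases "(x,x)\<in>F\<^sup>+")
    case False
    have nc: "\<not> (C \<in> cycles F \<and> (a,b)\<in>C \<and> x\<in>{a,b})" for C a b
      using vert cyc_vertex[OF fn] False by blast
    obtain m0 where m0: "m0\<in>M0" "x\<in>m0" "\<And>e. e\<in>M0 \<Longrightarrow> x\<in>e \<Longrightarrow> e = m0" using M0u xV by blast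
    have "m0 \<notin> und ` \<Union>(cycles F)"
    proof
      assume "m0 \<in> und ` \<Union>(cycles F)"
      then obtain C a b where "C\<in>cycles F" "(a,b)\<in>C" "m0 = und(a,b)" by auto
      then show False using nc m0(2) undab by auto
    qed
    then have "m0 \<in> M_eps M0 F eps" using m0 unfolding M_eps_def by blast
    moreover have "e = m0" if "e \<in> M_eps M0 F eps" "x \<in> e" for e
    proof (cases "e \<in> M0")
      case True then show ?thesis using m0(3) that(2) by blast
    next
      case False
      with that(1) obtain C a b where C: "C \<in> cycles F" "(a,b)\<in>C" "e = und (a,b)"
        unfolding M_eps_def by auto
      then show ?thesis using nc that(2) undab by auto
    qed
    ultimately show ?thesis using m0(2) by blast
  next
    case True
    define C0 where "C0 = Cu x"
    have C0c: "C0 \<in> cycles F" using True cyc C0_def by blast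
    obtain s where xs: "(x,s)\<in>F" using out xV by blast
    have xsC: "(x,s)\<in>C0" using xs True unfolding C0_def Cu_def by blast
    obtain p where xp: "(x,p)\<in>F\<^sup>*" and px: "(p,x)\<in>F" using True by (meson tranclD2)
    have xp': "(x,p)\<in>F\<^sup>+" using xp True by (metis rtranclD)
    have pxC: "(p,x)\<in>C0" using px xp' unfolding C0_def Cu_def by blast
    have altx: "und(p,x)\<in>M0 \<longleftrightarrow> und(x,s)\<notin>M0" using alt C0c pxC xsC by blast
    have onlyC0: "C = C0" if h: "C \<in> cycles F" "(a,b)\<in>C" "x\<in>{a,b}" for C a b
    proof -
      obtain u where u: "(u,u)\<in>F\<^sup>+" "(u,x)\<in>F\<^sup>+" "C = Cu u" using vert[OF h] by blast
      show ?thesis using sameC[OF u(1,2)] u(3) C0_def by simp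
    qed
    have edges: "und(a,b) = und(p,x) \<or> und(a,b) = und(x,s)" if "(a,b)\<in>C0" "x\<in>{a,b}" for a b
    proof (cases "a = x")
      case True
      then have "(x,b) \<in> F" using that(1) unfolding C0_def Cu_def by blast
      then have "b = s" using xs fn by blast
      then show ?thesis using True by simp
    next
      case False
      then have bx: "b = x" using that(2) by simp
      have ab: "(a,x)\<in>F" "(x,a)\<in>F\<^sup>+" using that(1) bx unfolding C0_def Cu_def by blast+
      have "a = p" using pred_unique[OF fn trancl_into_rtrancl[OF ab(2)] xp ab(1) px] .
      then show ?thesis using bx by simp
    qed
    obtain m0 where m0: "m0\<in>M0" "x\<in>m0" "\<And>e. e\<in>M0 \<Longrightarrow> x\<in>e \<Longrightarrow> e = m0" using M0u xV by blast
    have xpx: "x \<in> und(p,x)" and xxs: "x \<in> und(x,s)" using undab by auto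
    have m0C: "m0 = und(p,x) \<or> m0 = und(x,s)"
    proof (cases "und(p,x) \<in> M0")
      case True then show ?thesis using m0(3) xpx by blast
    next
      case False then have "und(x,s) \<in> M0" using altx by blast
      then show ?thesis using m0(3) xxs by blast
    qed
    have m0in: "m0 \<in> und ` \<Union>(cycles F)" using m0C pxC xsC C0c by blast
    have inC0: "e \<in> und ` C0 \<and> (e \<in> M0 \<longleftrightarrow> \<not> eps C0)" if e1: "e \<in> M_eps M0 F eps" and e2: "x \<in> e" for e
    proof -
      have "e \<notin> {e \<in> M0. e \<notin> und ` (\<Union>(cycles F))}"
        using m0in m0(3) e2 by blast
      then obtain C a b where C: "C \<in> cycles F" "(a,b)\<in>C" "e = und (a,b)"
        "(\<not> eps C \<and> e \<in> M0) \<or> (eps C \<and> e \<notin> M0)"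
        using e1 unfolding M_eps_def by auto
      have "x \<in> {a,b}" using C(3) e2 undab by auto
      then have "C = C0" using onlyC0[OF C(1,2)] by blast
      then show ?thesis using C by blast
    qed
    show ?thesis
    proof (cases "eps C0")
      case False
      have "m0 \<in> M_eps M0 F eps" using False m0C pxC xsC C0c m0(1)
        unfolding M_eps_def by blast
      moreover have "e = m0" if "e \<in> M_eps M0 F eps" "x \<in> e" for e
        using inC0[OF that] False m0(3) that(2) by blast
      ultimately show ?thesis using m0(2) by blast
    next
      case epsT: True
      define q where "q = (if und(p,x)\<in>M0 then und(x,s) else und(p,x))"
      have qn: "q \<notin> M0" using altx q_def by auto
      have "q \<in> und ` C0" using pxC xsC q_def by auto
      then have "q \<in> (\<Union>C\<in>{C \<in> cycles F. eps C}. und ` C - M0)" using epsT qn C0c by blast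
      then have "q \<in> M_eps M0 F eps" unfolding M_eps_def by blast
      moreover have "x \<in> q" using q_def undab by auto
      moreover have "e = q" if g: "e \<in> M_eps M0 F eps" "x \<in> e" for e
      proof -
        from inC0[OF g] epsT obtain a b where ab: "(a,b)\<in>C0" "e = und(a,b)" "e \<notin> M0" by auto
        have "x \<in> {a,b}" using ab(2) g(2) undab by auto
        from edges[OF ab(1) this] ab(2,3) have "e = und(p,x) \<or> e = und(x,s)" by simp
        then show ?thesis using ab(3) altx unfolding q_def by (cases "und(p,x)\<in>M0") auto
      qed
      ultimately show ?thesis by blast
    qed
  qed
  show ?thesis unfolding perfect_matching_def V_def[symmetric] using Msub Muniq by blast
qed

end
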